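(* Suppose $m>1$. Then the criteria $\rho_1,\dots,\rho_5$ are continuous in both arguments almost everywhere on $\mathcal{P}\times\mathcal{P}$, and the criterion $\rho_3$ is continuous on $\mathcal{P}\times\mathcal{P}$, where $\rho_1(X,Y)=\frac{m_{11}}{m_{11}+m_{10}}$ (Wallace I), $\rho_2(X,Y)=\frac{m_{11}}{m_{11}+m_{01}}$ (Wallace II), $\rho_3(X,Y)=\frac{m_{11}+m_{00}}{N}$ (Rand), $\rho_4(X,Y)=\frac{m_{11}}{\sqrt{(m_{11}+m_{10})(m_{11}+m_{01})}}$ (Fowlkes–Mallows), $\rho_5(X,Y)=\frac{m_{11}}{m_{11}+m_{10}+m_{01}}$ (Jaccard).
   Context: Let $\mathcal{Z}=\{z_1,\dots,z_m\}$, $1\le\ell\le m$, $\mathcal{X} = \{\mathbf{X}\in[0,1]^{\ell\times m} : \mathbf{X}^T\mathbf{1}_\ell = \mathbf{1}_m\}$, and $\mathcal{P}=\mathcal{X}/\Pi$ the set of orbits of $\mathcal{X}$ under left multiplication by $\ell\times\ell$ permutation matrices, with metric $\delta_2(X,Y)=\min\{\|\mathbf{X}-\mathbf{Y}\|_2:\mathbf{X}\in X,\mathbf{Y}\in Y\}$ (Frobenius norm); continuity is with respect to $\delta_2$. For $X\in\mathcal{P}$, $\mathbf{C}_X=\mathbf{X}^T\mathbf{X}$ for any representative $\mathbf{X}\in X$. For $m\times m$ matrices, $\chi(\mathbf{A},\mathbf{B})=\sum_{r<s}a_{rs}b_{rs}$; $\mathbf{1}$ is the $m\times m$ all-ones matrix.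 Set $m_{11}=\chi(\mathbf{C}_X,\mathbf{C}_Y)$, $m_{10}=\chi(\mathbf{C}_X,\mathbf{1}-\mathbf{C}_Y)$, $m_{01}=\chi(\mathbf{1}-\mathbf{C}_X,\mathbf{C}_Y)$, $m_{00}=\chi(\mathbf{1}-\mathbf{C}_X,\mathbf{1}-\mathbf{C}_Y)$, and $N=m(m-1)/2$. *)

theory Defs
  imports "HOL-Probability.Probability"
begin

text \<open>Matrices are functions nat => nat => real; an l x m matrix uses the
indices i < l (rows), j < m (columns) and is 0 elsewhere.\<close>

definition Xset :: "nat \<Rightarrow> nat \<Rightarrow> (nat \<Rightarrow> nat \<Rightarrow> real) set" where
  "Xset l m = {X. (\<forall>i j. i < l \<and> j < m \<longrightarrow> 0 \<le> X i j \<and> X i j \<le> 1)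
                 \<and> (\<forall>j < m. (\<Sum>i<l. X i j) = 1)
                 \<and> (\<forall>i j. \<not> (i < l \<and> j < m) \<longrightarrow> X i j = 0)}"

definition orbit :: "nat \<Rightarrow> (nat \<Rightarrow> nat \<Rightarrow> real) \<Rightarrow> (nat \<Rightarrow> nat \<Rightarrow> real) set" where
  "orbit l X = {(\<lambda>i j. X (\<sigma> i) j) | \<sigma>. \<sigma> permutes {..<l}}"

definition Pset :: "nat \<Rightarrow> nat \<Rightarrow> (nat \<Rightarrow> nat \<Rightarrow> real) set set" where
  "Pset l m = orbit l ` Xset l m"

definition frob :: "nat \<Rightarrow> nat \<Rightarrow> (nat \<Rightarrow> nat \<Rightarrow> real) \<Rightarrow> (nat \<Rightarrow> nat \<Rightarrow> real) \<Rightarrow> real" where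
  "frob l m X Y = sqrt (\<Sum>i<l. \<Sum>j<m. (X i j - Y i j)\<^sup>2)"

definition delta2 :: "nat \<Rightarrow> nat \<Rightarrow> (nat \<Rightarrow> nat \<Rightarrow> real) set \<Rightarrow> (nat \<Rightarrow> nat \<Rightarrow> real) set \<Rightarrow> real" where
  "delta2 l m A B = Min {frob l m X Y | X Y. X \<in> A \<and> Y \<in> B}"

text \<open>C_X = X^T X for any representative of the orbit.\<close>
definition Cmat :: "nat \<Rightarrow> (nat \<Rightarrow> nat \<Rightarrow> real) set \<Rightarrow> nat \<Rightarrow> nat \<Rightarrow> real" where
  "Cmat l A = (let X = (SOME X. X \<in> A) in (\<lambda>r s. \<Sum>i<l. X i r * X i s))"

definition chi :: "nat \<Rightarrow> (nat \<Rightarrow> nat \<Rightarrow> real) \<Rightarrow> (nat \<Rightarrow> nat \<Rightarrow> real) \<Rightarrow> real" where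
  "chi m A B = (\<Sum>r<m. \<Sum>s\<in>{r<..<m}. A r s * B r s)"

definition compl1 :: "(nat \<Rightarrow> nat \<Rightarrow> real) \<Rightarrow> nat \<Rightarrow> nat \<Rightarrow> real" where
  "compl1 C = (\<lambda>r s. 1 - C r s)"

definition m11 where "m11 l m A B = chi m (Cmat l A) (Cmat l B)"
definition m10 where "m10 l m A B = chi m (Cmat l A) (compl1 (Cmat l B))"
definition m01 where "m01 l m A B = chi m (compl1 (Cmat l A)) (Cmat l B)"
definition m00 where "m00 l m A B = chi m (compl1 (Cmat l A)) (compl1 (Cmat l B))"

definition Npairs :: "nat \<Rightarrow> real" where "Npairs m = real m * (real m - 1) / 2"

definition rho1 where "rho1 l m A B = m11 l m A B / (m11 l m A B + m10 l m A B)"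
definition rho2 where "rho2 l m A B = m11 l m A B / (m11 l m A B + m01 l m A B)"
definition rho3 where "rho3 l m A B = (m11 l m A B + m00 l m A B) / Npairs m"
definition rho4 where "rho4 l m A B =
   m11 l m A B / sqrt ((m11 l m A B + m10 l m A B) * (m11 l m A B + m01 l m A B))"
definition rho5 where "rho5 l m A B = m11 l m A B / (m11 l m A B + m10 l m A B + m01 l m A B)"

definition cont_at_PP ::
  "nat \<Rightarrow> nat \<Rightarrow> ((nat \<Rightarrow> nat \<Rightarrow> real) set \<Rightarrow> (nat \<Rightarrow> nat \<Rightarrow> real) set \<Rightarrow> real)
   \<Rightarrow> (nat \<Rightarrow> nat \<Rightarrow> real) set \<Rightarrow> (nat \<Rightarrow> nat \<Rightarrow> real) set \<Rightarrow> bool" where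
  "cont_at_PP l m f A B \<longleftrightarrow> (\<forall>e>0. \<exists>d>0. \<forall>A'\<in>Pset l m. \<forall>B'\<in>Pset l m.
      delta2 l m A A' < d \<and> delta2 l m B B' < d \<longrightarrow> \<bar>f A' B' - f A B\<bar> < e)"

text \<open>Lebesgue measure on the free coordinates of X (rows 0..l-2); the last row
is determined by the column-sum constraint.\<close>
definition PM :: "nat \<Rightarrow> nat \<Rightarrow> (nat \<times> nat \<Rightarrow> real) measure" where
  "PM l m = PiM ({..<l-1} \<times> {..<m}) (\<lambda>_. lborel)"

definition lift :: "nat \<Rightarrow> nat \<Rightarrow> (nat \<times> nat \<Rightarrow> real) \<Rightarrow> nat \<Rightarrow> nat \<Rightarrow> real" where
  "lift l m p = (\<lambda>i j. if i < l - 1 \<and> j < m then p (i, j)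
                        else if i = l - 1 \<and> j < m then 1 - (\<Sum>k<l-1. p (k, j)) else 0)"

definition ae_cont_PP where
  "ae_cont_PP l m f \<longleftrightarrow> (AE z in PM l m \<Otimes>\<^sub>M PM l m.
      lift l m (fst z) \<in> Xset l m \<and> lift l m (snd z) \<in> Xset l m \<longrightarrow>
      cont_at_PP l m f (orbit l (lift l m (fst z))) (orbit l (lift l m (snd z))))"

end

theory Submission
  imports Defs
begin

lemma psf: "product_sigma_finite (\<lambda>_::nat\<times>nat. (lborel::real measure))"
  by (simp add: product_sigma_finite_def lborel.sigma_finite_measure_axioms)

lemma null_coord:
  assumes "finite I" "k \<in> I"
  shows "{p \<in> space (PiM I (\<lambda>_::nat\<times>nat. (lborel::real measure))). p k = 0} \<in> null_sets (PiM I (\<lambda>_. lborel))"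
proof -
  interpret product_sigma_finite "\<lambda>_::nat\<times>nat. (lborel::real measure)" by (rule psf)
  let ?A = "\<lambda>i. if i = k then {0::real} else UNIV"
  have eq: "{p \<in> space (PiM I (\<lambda>_. lborel)). p k = 0} = Pi\<^sub>E I ?A"
    using assms apply (auto simp: space_PiM PiE_def Pi_def) by (metis surj_pair)
  have "emeasure (PiM I (\<lambda>_. lborel)) (Pi\<^sub>E I ?A) = (\<Prod>i\<in>I. emeasure lborel (?A i))"
    by (rule emeasure_PiM) (auto simp: assms)
  also have "\<dots> = 0" using assms by (intro prod_zero) (auto intro!: bexI[of _ k])
  moreover have "Pi\<^sub>E I ?A \<in> sets (PiM I (\<lambda>_. lborel))"
    by (rule sets_PiM_I_finite) (auto simp: assms)
  ultimately show ?thesis unfolding eq by (auto simp: null_sets_def)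
qed

lemma sfPM: "sigma_finite_measure (PM l m)"
  unfolding PM_def by (rule product_sigma_finite.sigma_finite[OF psf]) auto

lemma null_PM: "k \<in> {..<l-1} \<times> {..<m} \<Longrightarrow> {p \<in> space (PM l m). p k = 0} \<in> null_sets (PM l m)"
  unfolding PM_def by (rule null_coord) auto

lemma ae_lemma:
  assumes l: "1 \<le> l" and m: "1 < m"
    and H: "\<And>X Y. X \<in> Xset l m \<Longrightarrow> Y \<in> Xset l m \<Longrightarrow> X 0 0 \<noteq> 0 \<Longrightarrow> X 0 1 \<noteq> 0 \<Longrightarrow>
             Y 0 0 \<noteq> 0 \<Longrightarrow> Y 0 1 \<noteq> 0 \<Longrightarrow> cont_at_PP l m f (orbit l X) (orbit l Y)"
  shows "ae_cont_PP l m f"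
proof (cases "l = 1")
  case True
  have one: "X 0 j = 1" if "X \<in> Xset l m" "j < m" for X j
    using that True by (auto simp: Xset_def)
  show ?thesis unfolding ae_cont_PP_def
  proof (rule AE_I2, intro impI)
    fix z :: "(nat \<times> nat \<Rightarrow> real) \<times> (nat \<times> nat \<Rightarrow> real)"
    assume a: "lift l m (fst z) \<in> Xset l m \<and> lift l m (snd z) \<in> Xset l m"
    show "cont_at_PP l m f (orbit l (lift l m (fst z))) (orbit l (lift l m (snd z)))"
      using a m by (intro H) (auto simp: one)
  qed
next
  case False
  hence l2: "0 < l - 1" using l by auto
  interpret S: sigma_finite_measure "PM l m" by (rule sfPM)
  let ?M = "PM l m"
  let ?Z = "\<lambda>k. {p \<in> space ?M. p k = 0}"
  let ?N = "(?Z (0,0) \<times> space ?M \<union> ?Z (0,1) \<times> space ?M) \<union> (space ?M \<times> ?Z (0,0) \<union> space ?M \<times> ?Z (0,1))"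
  have z: "?Z (0,0) \<in> null_sets ?M" "?Z (0,1) \<in> null_sets ?M"
    using l2 m by (auto intro!: null_PM)
  have N: "?N \<in> null_sets (?M \<Otimes>\<^sub>M ?M)"
    using z by (intro null_sets.Un S.times_in_null_sets1 S.times_in_null_sets2) auto
  have lf: "lift l m p 0 j = p (0, j)" if "j < m" for p j
    using that l2 by (simp add: lift_def)
  show ?thesis unfolding ae_cont_PP_def
  proof (rule AE_I'[OF N], rule subsetI)
    fix z assume zz: "z \<in> {x \<in> space (?M \<Otimes>\<^sub>M ?M). \<not> (lift l m (fst x) \<in> Xset l m \<and> lift l m (snd x) \<in> Xset l m \<longrightarrow>
          cont_at_PP l m f (orbit l (lift l m (fst x))) (orbit l (lift l m (snd x))))}"
    obtain a b where zab: "z = (a, b)" by (cases z)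
    have sp: "a \<in> space ?M" "b \<in> space ?M" using zz zab by (auto simp: space_pair_measure)
    from zz zab have "lift l m a \<in> Xset l m" "lift l m b \<in> Xset l m"
      "\<not> cont_at_PP l m f (orbit l (lift l m a)) (orbit l (lift l m b))" by auto
    hence "a (0,0) = 0 \<or> a (0,1) = 0 \<or> b (0,0) = 0 \<or> b (0,1) = 0"
      using H[of "lift l m a" "lift l m b"] lf m by auto
    thus "z \<in> ?N" using sp zab by auto
  qed
qed


definition CC :: "nat \<Rightarrow> (nat \<Rightarrow> nat \<Rightarrow> real) \<Rightarrow> nat \<Rightarrow> nat \<Rightarrow> real" where
  "CC l X = (\<lambda>r s. \<Sum>i<l. X i r * X i s)"

lemma orbit_Xset:
  assumes X: "X \<in> Xset l m" and Y: "Y \<in> orbit l X" shows "Y \<in> Xset l m"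
proof -
  obtain \<sigma> where s: "\<sigma> permutes {..<l}" and Yd: "Y = (\<lambda>i j. X (\<sigma> i) j)"
    using Y by (auto simp: orbit_def)
  have lt: "\<sigma> i < l \<longleftrightarrow> i < l" for i
    using permutes_in_image[OF s] by auto
  have out: "\<not> i < l \<Longrightarrow> \<sigma> i = i" for i using s by (auto simp: permutes_def)
  have sum: "(\<Sum>i<l. X (\<sigma> i) j) = (\<Sum>i<l. X i j)" for j
    using sum.permute[OF s, of "\<lambda>i. X i j"] by (simp add: comp_def)
  show ?thesis using X unfolding Yd Xset_def
    by (auto simp: sum lt out)
qed

lemma CC_orbit: assumes "Y \<in> orbit l X" shows "CC l Y = CC l X"
proof -
  obtain \<sigma> where s: "\<sigma> permutes {..<l}" and Yd: "Y = (\<lambda>i j. X (\<sigma> i) j)"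
    using assms by (auto simp: orbit_def)
  have "(\<Sum>i<l. X (\<sigma> i) r * X (\<sigma> i) t) = (\<Sum>i<l. X i r * X i t)" for r t
    using sum.permute[OF s, of "\<lambda>i. X i r * X i t"] by (simp add: comp_def)
  thus ?thesis unfolding CC_def Yd by simp
qed

lemma orbit_self: "X \<in> orbit l X"
  unfolding orbit_def by (auto intro!: exI[of _ id] permutes_id)

lemma Cmat_orbit: "Cmat l (orbit l X) = CC l X"
proof -
  have "\<exists>Y. Y \<in> orbit l X" using orbit_self by blast
  hence "(SOME Y. Y \<in> orbit l X) \<in> orbit l X" by (rule someI_ex)
  hence "CC l (SOME Y. Y \<in> orbit l X) = CC l X" by (rule CC_orbit)
  thus ?thesis unfolding Cmat_def Let_def CC_def .
qed

lemma finite_orbit: "finite (orbit l X)"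
proof -
  have "orbit l X = (\<lambda>\<sigma>. \<lambda>i j. X (\<sigma> i) j) ` {\<sigma>. \<sigma> permutes {..<l}}"
    unfolding orbit_def by auto
  thus ?thesis using finite_permutations[of "{..<l}"] by simp
qed

lemma delta2_wit:
  assumes "finite A" "finite B" "A \<noteq> {}" "B \<noteq> {}"
  shows "\<exists>X\<in>A. \<exists>Y\<in>B. delta2 l m A B = frob l m X Y"
proof -
  have eq: "{frob l m X Y | X Y. X \<in> A \<and> Y \<in> B} = (\<lambda>(X,Y). frob l m X Y) ` (A \<times> B)" by auto
  have "delta2 l m A B \<in> (\<lambda>(X,Y). frob l m X Y) ` (A \<times> B)"
    unfolding delta2_def eq using assms by (intro Min_in) auto
  thus ?thesis by auto
qed

lemma frob_entry:
  assumes "i < l" "j < m" shows "\<bar>X i j - Y i j\<bar> \<le> frob l m X Y"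
proof -
  have "(X i j - Y i j)\<^sup>2 \<le> (\<Sum>j<m. (X i j - Y i j)\<^sup>2)"
    using assms by (intro member_le_sum) auto
  also have "\<dots> \<le> (\<Sum>i<l. \<Sum>j<m. (X i j - Y i j)\<^sup>2)"
    using assms by (intro member_le_sum[where f = "\<lambda>i. \<Sum>j<m. (X i j - Y i j)\<^sup>2"] sum_nonneg) auto
  finally have "(X i j - Y i j)\<^sup>2 \<le> (\<Sum>i<l. \<Sum>j<m. (X i j - Y i j)\<^sup>2)" .
  hence "sqrt ((X i j - Y i j)\<^sup>2) \<le> sqrt (\<Sum>i<l. \<Sum>j<m. (X i j - Y i j)\<^sup>2)"
    by (rule real_sqrt_le_mono)
  thus ?thesis unfolding frob_def real_sqrt_abs .
qed

lemma prod_close: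
  fixes a b c e d :: real
  assumes "0 \<le> a" "a \<le> 1" "0 \<le> e" "e \<le> 1" "\<bar>a - c\<bar> \<le> d" "\<bar>b - e\<bar> \<le> d"
  shows "\<bar>a * b - c * e\<bar> \<le> 2 * d"
proof -
  have "a * b - c * e = a * (b - e) + e * (a - c)" by (simp add: algebra_simps)
  moreover have "\<bar>a * (b - e)\<bar> \<le> d"
  proof -
    have "\<bar>a * (b - e)\<bar> = a * \<bar>b - e\<bar>" using assms by (simp add: abs_mult)
    also have "\<dots> \<le> \<bar>b - e\<bar>" using assms by (intro mult_left_le_one_le) auto
    finally show ?thesis using assms by linarith
  qed
  moreover have "\<bar>e * (a - c)\<bar> \<le> d"
  proof -
    have "\<bar>e * (a - c)\<bar> = e * \<bar>a - c\<bar>" using assms by (simp add: abs_mult)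
    also have "\<dots> \<le> \<bar>a - c\<bar>" using assms by (intro mult_left_le_one_le) auto
    finally show ?thesis using assms by linarith
  qed
  ultimately show ?thesis by linarith
qed

lemma Xset_entry: "X \<in> Xset l m \<Longrightarrow> i < l \<Longrightarrow> 0 \<le> X i j \<and> X i j \<le> 1"
  unfolding Xset_def by (cases "j < m") auto

lemma CC_close:
  assumes X: "X \<in> Xset l m" and Y: "Y \<in> Xset l m" and d: "frob l m X Y \<le> d"
  shows "\<bar>CC l X r s - CC l Y r s\<bar> \<le> 2 * real l * d"
proof -
  have ent: "\<bar>X i j - Y i j\<bar> \<le> d" if "i < l" for i j
  proof (cases "j < m")
    case True thus ?thesis using frob_entry[OF that True, of X Y] d by linarith
  next
    case False
    have "0 \<le> frob l m X Y" unfolding frob_def by (auto intro!: sum_nonneg)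
    thus ?thesis using False X Y d by (auto simp: Xset_def)
  qed
  have "\<bar>CC l X r s - CC l Y r s\<bar> = \<bar>\<Sum>i<l. X i r * X i s - Y i r * Y i s\<bar>"
    unfolding CC_def by (simp add: sum_subtractf)
  also have "\<dots> \<le> (\<Sum>i<l. \<bar>X i r * X i s - Y i r * Y i s\<bar>)" by (rule sum_abs)
  also have "\<dots> \<le> (\<Sum>i<l. 2 * d)"
  proof (rule sum_mono)
    fix i assume "i \<in> {..<l}"
    hence i: "i < l" by simp
    show "\<bar>X i r * X i s - Y i r * Y i s\<bar> \<le> 2 * d"
      using Xset_entry[OF X i, of r] Xset_entry[OF Y i, of s] ent[OF i, of r] ent[OF i, of s]
      by (intro prod_close) auto
  qed
  finally show ?thesis by simp
qed

lemma Pset_close: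
  assumes A: "A \<in> Pset l m" and A': "A' \<in> Pset l m" and d: "delta2 l m A A' < d"
  shows "\<bar>Cmat l A' r s - Cmat l A r s\<bar> \<le> 2 * real l * d"
proof -
  obtain X where X: "X \<in> Xset l m" "A = orbit l X" using A by (auto simp: Pset_def)
  obtain X' where X': "X' \<in> Xset l m" "A' = orbit l X'" using A' by (auto simp: Pset_def)
  obtain X1 X2 where X1: "X1 \<in> A" and X2: "X2 \<in> A'" and e: "delta2 l m A A' = frob l m X1 X2"
    using delta2_wit[of A A' l m] X X' finite_orbit orbit_self by blast
  have "\<bar>CC l X1 r s - CC l X2 r s\<bar> \<le> 2 * real l * d"
    using X X' X1 X2 e d by (intro CC_close) (auto intro: orbit_Xset)
  moreover have "Cmat l A = CC l X1" "Cmat l A' = CC l X2"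
    using X X' X1 X2 Cmat_orbit CC_orbit by auto
  ultimately show ?thesis by (simp add: abs_minus_commute)
qed

definition nbF where
  "nbF l m A B = (INF d\<in>{0::real<..}. principal {p. fst p \<in> Pset l m \<and> snd p \<in> Pset l m \<and>
      delta2 l m A (fst p) < d \<and> delta2 l m B (snd p) < d})"

lemma ev_nbF:
  "eventually P (nbF l m A B) \<longleftrightarrow> (\<exists>d>0. \<forall>p. fst p \<in> Pset l m \<and> snd p \<in> Pset l m \<and>
      delta2 l m A (fst p) < d \<and> delta2 l m B (snd p) < d \<longrightarrow> P p)"
  unfolding nbF_def
proof (subst eventually_INF_base)
  show "{0::real<..} \<noteq> {}" by auto
next
  fix a b :: real assume "a \<in> {0<..}" "b \<in> {0<..}"
  thus "\<exists>x\<in>{0<..}. principal {p. fst p \<in> Pset l m \<and> snd p \<in> Pset l m \<and>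
      delta2 l m A (fst p) < x \<and> delta2 l m B (snd p) < x}
     \<le> inf (principal {p. fst p \<in> Pset l m \<and> snd p \<in> Pset l m \<and>
      delta2 l m A (fst p) < a \<and> delta2 l m B (snd p) < a})
      (principal {p. fst p \<in> Pset l m \<and> snd p \<in> Pset l m \<and>
      delta2 l m A (fst p) < b \<and> delta2 l m B (snd p) < b})"
    by (intro bexI[of _ "min a b"]) (auto simp: inf_principal)
next
  show "(\<exists>b\<in>{0<..}. eventually P (principal {p. fst p \<in> Pset l m \<and> snd p \<in> Pset l m \<and>
      delta2 l m A (fst p) < b \<and> delta2 l m B (snd p) < b})) =
    (\<exists>d>0. \<forall>p. fst p \<in> Pset l m \<and> snd p \<in> Pset l m \<and>
      delta2 l m A (fst p) < d \<and> delta2 l m B (snd p) < d \<longrightarrow> P p)"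
    by (auto simp: eventually_principal)
qed

lemma cont_from_tendsto:
  assumes "((\<lambda>p. f (fst p) (snd p)) \<longlongrightarrow> f A B) (nbF l m A B)"
  shows "cont_at_PP l m f A B"
  unfolding cont_at_PP_def
proof (intro allI impI)
  fix e :: real assume "e > 0"
  with assms have "eventually (\<lambda>p. dist (f (fst p) (snd p)) (f A B) < e) (nbF l m A B)"
    by (rule tendstoD)
  then obtain d where "d > 0" and H: "\<And>p. fst p \<in> Pset l m \<and> snd p \<in> Pset l m \<and>
      delta2 l m A (fst p) < d \<and> delta2 l m B (snd p) < d \<Longrightarrow> dist (f (fst p) (snd p)) (f A B) < e"
    unfolding ev_nbF by blast
  show "\<exists>d>0. \<forall>A'\<in>Pset l m. \<forall>B'\<in>Pset l m.
      delta2 l m A A' < d \<and> delta2 l m B B' < d \<longrightarrow> \<bar>f A' B' - f A B\<bar> < e"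
    using \<open>d > 0\<close> H[of "(_, _)"] by (auto simp: dist_real_def)
qed

lemma tend_gen:
  assumes A: "A \<in> Pset l m" and B: "B \<in> Pset l m"
  shows "((\<lambda>p. Cmat l (fst p) r s) \<longlongrightarrow> Cmat l A r s) (nbF l m A B)"
    "((\<lambda>p. Cmat l (snd p) r s) \<longlongrightarrow> Cmat l B r s) (nbF l m A B)"
proof -
  have key: "\<exists>d>0. 2 * real l * d < e" if "e > 0" for e :: real
    using that by (intro exI[of _ "e / (2 * real l + 1)"]) (auto simp: field_simps)
  show "((\<lambda>p. Cmat l (fst p) r s) \<longlongrightarrow> Cmat l A r s) (nbF l m A B)"
  proof (rule tendstoI)
    fix e :: real assume "e > 0"
    then obtain d where d: "d > 0" "2 * real l * d < e" using key by blast
    show "eventually (\<lambda>p. dist (Cmat l (fst p) r s) (Cmat l A r s) < e) (nbF l m A B)"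
      unfolding ev_nbF
    proof (intro exI[of _ d] conjI allI impI)
      show "d > 0" using d by simp
      fix p :: "(nat \<Rightarrow> nat \<Rightarrow> real) set \<times> (nat \<Rightarrow> nat \<Rightarrow> real) set"
      assume p: "fst p \<in> Pset l m \<and> snd p \<in> Pset l m \<and> delta2 l m A (fst p) < d \<and> delta2 l m B (snd p) < d"
      have "\<bar>Cmat l (fst p) r s - Cmat l A r s\<bar> \<le> 2 * real l * d"
        using p by (intro Pset_close[OF A]) auto
      thus "dist (Cmat l (fst p) r s) (Cmat l A r s) < e" using d by (simp add: dist_real_def)
    qed
  qed
  show "((\<lambda>p. Cmat l (snd p) r s) \<longlongrightarrow> Cmat l B r s) (nbF l m A B)"
  proof (rule tendstoI)
    fix e :: real assume "e > 0"
    then obtain d where d: "d > 0" "2 * real l * d < e" using key by blast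
    show "eventually (\<lambda>p. dist (Cmat l (snd p) r s) (Cmat l B r s) < e) (nbF l m A B)"
      unfolding ev_nbF
    proof (intro exI[of _ d] conjI allI impI)
      show "d > 0" using d by simp
      fix p :: "(nat \<Rightarrow> nat \<Rightarrow> real) set \<times> (nat \<Rightarrow> nat \<Rightarrow> real) set"
      assume p: "fst p \<in> Pset l m \<and> snd p \<in> Pset l m \<and> delta2 l m A (fst p) < d \<and> delta2 l m B (snd p) < d"
      have "\<bar>Cmat l (snd p) r s - Cmat l B r s\<bar> \<le> 2 * real l * d"
        using p by (intro Pset_close[OF B]) auto
      thus "dist (Cmat l (snd p) r s) (Cmat l B r s) < e" using d by (simp add: dist_real_def)
    qed
  qed
qed


lemma CC_nonneg: "X \<in> Xset l m \<Longrightarrow> 0 \<le> CC l X r s"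
  unfolding CC_def using Xset_entry by (intro sum_nonneg) (simp add: Xset_entry)

lemma CC_le1:
  assumes X: "X \<in> Xset l m" and r: "r < m" shows "CC l X r s \<le> 1"
proof -
  have "CC l X r s \<le> (\<Sum>i<l. X i r)" unfolding CC_def
    using Xset_entry[OF X] by (intro sum_mono) (simp add: mult_right_le_one_le)
  also have "\<dots> = 1" using X r by (simp add: Xset_def)
  finally show ?thesis .
qed

lemma tends_m:
  assumes A: "A \<in> Pset l m" and B: "B \<in> Pset l m"
  shows "((\<lambda>p. m11 l m (fst p) (snd p)) \<longlongrightarrow> m11 l m A B) (nbF l m A B)"
    "((\<lambda>p. m10 l m (fst p) (snd p)) \<longlongrightarrow> m10 l m A B) (nbF l m A B)"
    "((\<lambda>p. m01 l m (fst p) (snd p)) \<longlongrightarrow> m01 l m A B) (nbF l m A B)"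
    "((\<lambda>p. m00 l m (fst p) (snd p)) \<longlongrightarrow> m00 l m A B) (nbF l m A B)"
  unfolding m11_def m10_def m01_def m00_def chi_def compl1_def
  by (intro tendsto_sum tendsto_mult tendsto_diff tendsto_const tend_gen[OF A B])+

lemma Npos: "1 < m \<Longrightarrow> Npairs m \<noteq> 0"
  unfolding Npairs_def by auto

lemma rho3_cont:
  assumes "1 < m" "A \<in> Pset l m" "B \<in> Pset l m"
  shows "cont_at_PP l m (rho3 l m) A B"
  apply (rule cont_from_tendsto)
  unfolding rho3_def
  by (intro tendsto_divide tendsto_add tendsto_const tends_m[OF assms(2,3)] Npos assms(1))

lemma sumC_pos:
  assumes m: "1 < m" and X: "X \<in> Xset l m" and p: "0 < CC l X 0 1"
  shows "0 < (\<Sum>r<m. \<Sum>s\<in>{r<..<m}. CC l X r s)"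
proof -
  have "CC l X 0 1 \<le> (\<Sum>s\<in>{0<..<m}. CC l X 0 s)"
    using m CC_nonneg[OF X] by (intro member_le_sum) auto
  also have "\<dots> \<le> (\<Sum>r<m. \<Sum>s\<in>{r<..<m}. CC l X r s)"
    using m CC_nonneg[OF X]
    by (intro member_le_sum[where f = "\<lambda>r. \<Sum>s\<in>{r<..<m}. CC l X r s"] sum_nonneg) auto
  finally show ?thesis using p by linarith
qed

lemma main_cont:
  assumes m: "1 < m" and X: "X \<in> Xset l m" and Y: "Y \<in> Xset l m"
    and pX: "0 < CC l X 0 1" and pY: "0 < CC l Y 0 1"
  shows "cont_at_PP l m (rho1 l m) (orbit l X) (orbit l Y)"
    "cont_at_PP l m (rho2 l m) (orbit l X) (orbit l Y)"
    "cont_at_PP l m (rho3 l m) (orbit l X) (orbit l Y)"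
    "cont_at_PP l m (rho4 l m) (orbit l X) (orbit l Y)"
    "cont_at_PP l m (rho5 l m) (orbit l X) (orbit l Y)"
proof -
  let ?A = "orbit l X" and ?B = "orbit l Y"
  have A: "?A \<in> Pset l m" and B: "?B \<in> Pset l m" using X Y by (auto simp: Pset_def)
  note t = tends_m[OF A B]
  have s1: "m11 l m ?A ?B + m10 l m ?A ?B = (\<Sum>r<m. \<Sum>s\<in>{r<..<m}. CC l X r s)"
    unfolding m11_def m10_def chi_def compl1_def Cmat_orbit
    by (simp add: sum.distrib[symmetric] ring_distribs)
  have s2: "m11 l m ?A ?B + m01 l m ?A ?B = (\<Sum>r<m. \<Sum>s\<in>{r<..<m}. CC l Y r s)"
    unfolding m11_def m01_def chi_def compl1_def Cmat_orbit
    by (simp add: sum.distrib[symmetric] ring_distribs)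
  have p1: "0 < m11 l m ?A ?B + m10 l m ?A ?B" using s1 sumC_pos[OF m X pX] by simp
  have p2: "0 < m11 l m ?A ?B + m01 l m ?A ?B" using s2 sumC_pos[OF m Y pY] by simp
  have n01: "0 \<le> m01 l m ?A ?B"
    unfolding m01_def chi_def compl1_def Cmat_orbit
    using CC_le1[OF X] CC_nonneg[OF Y] by (intro sum_nonneg mult_nonneg_nonneg) auto
  show "cont_at_PP l m (rho3 l m) ?A ?B" using rho3_cont[OF m A B] .
  show "cont_at_PP l m (rho1 l m) ?A ?B"
    apply (rule cont_from_tendsto) unfolding rho1_def
    using p1 by (intro tendsto_divide tendsto_add t) auto
  show "cont_at_PP l m (rho2 l m) ?A ?B"
    apply (rule cont_from_tendsto) unfolding rho2_def
    using p2 by (intro tendsto_divide tendsto_add t) auto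
  show "cont_at_PP l m (rho5 l m) ?A ?B"
    apply (rule cont_from_tendsto) unfolding rho5_def
    using p1 n01 by (intro tendsto_divide tendsto_add t) auto
  show "cont_at_PP l m (rho4 l m) ?A ?B"
    apply (rule cont_from_tendsto) unfolding rho4_def
    using p1 p2 by (intro tendsto_divide tendsto_add tendsto_mult tendsto_real_sqrt t) auto
qed


lemma CC01_pos:
  assumes l: "1 \<le> l" and X: "X \<in> Xset l m" and a: "X 0 0 \<noteq> 0" and b: "X 0 1 \<noteq> 0"
  shows "0 < CC l X 0 1"
proof -
  have "0 < X 0 0" "0 < X 0 1" using Xset_entry[OF X, of 0] l a b by (auto simp: order_le_less)
  hence "0 < X 0 0 * X 0 1" by simp
  also have "\<dots> \<le> CC l X 0 1" unfolding CC_def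
    using l Xset_entry[OF X] by (intro member_le_sum[where f = "\<lambda>i. X i 0 * X i 1"]) auto
  finally show ?thesis .
qed

theorem proposition2:
  fixes l m :: nat
  assumes "1 \<le> l" and "l \<le> m" and "1 < m"
  shows "ae_cont_PP l m (rho1 l m) \<and> ae_cont_PP l m (rho2 l m) \<and> ae_cont_PP l m (rho3 l m)
         \<and> ae_cont_PP l m (rho4 l m) \<and> ae_cont_PP l m (rho5 l m)
         \<and> (\<forall>A\<in>Pset l m. \<forall>B\<in>Pset l m. cont_at_PP l m (rho3 l m) A B)"
proof -
  note mc = main_cont[OF assms(3) _ _ CC01_pos[OF assms(1)] CC01_pos[OF assms(1)]]
  show ?thesis
    using assms rho3_cont[OF assms(3)]
    by (intro conjI ballI ae_lemma[OF assms(1) assms(3)] mc) auto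
qed

end
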